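(* Let $\eta,\theta\in\mathbb{R}$, $\sigma,\tau\ge0$ with $\sigma\tau\ne1$, and fix $t>0$. Suppose $(c_k)_{k\ge1}$ is a real sequence with $c_1=1$ satisfying, for every $k\ge2$, $$c_{k+1}=\frac{\theta-\eta t}{1+\sigma t}c_k+\frac{t+\tau}{1+\sigma t}\Big(\sum_{j=1}^{k-1}c_jc_{k-j}+\eta\sum_{j=0}^{k-1}c_{j+1}c_{k-j}+\sigma\sum_{j=0}^{k-1}c_{j+2}c_{k-j}\Big).$$ Then for every $p>1$ there exists a constant $M$ such that $|c_k|\le \dfrac{M^{k-2}}{k^p}$ for all $k\ge3$. *)

theory Defs
  imports Complex_Main
begin

end

theory Submission
  imports Defs
begin

definition w :: "nat \<Rightarrow> real" where "w i = 1 / (real i)^2"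

lemma w_pos: "i \<ge> 1 \<Longrightarrow> w i > 0" by (simp add: w_def)
lemma w_nonneg: "w i \<ge> 0" by (simp add: w_def)
lemma w_le1: "i \<ge> 1 \<Longrightarrow> w i \<le> 1" by (simp add: w_def)
lemma w_one: "w 1 = 1" by (simp add: w_def)
lemma w_mono: "1 \<le> i \<Longrightarrow> i \<le> j \<Longrightarrow> w j \<le> w i"
  unfolding w_def by (simp add: frac_le power_mono)
lemma w_suc: "i \<ge> 1 \<Longrightarrow> w i \<le> 4 * w (i+1)"
proof -
  assume "i \<ge> 1"
  then have a: "real i * real i \<ge> real i * 1" by (intro mult_left_mono) auto
  have b: "(real i+1)^2 = real i * real i + 2*real i + 1" "(real i)^2 = real i * real i"
    by (simp_all add: power2_eq_square algebra_simps)
  have "(real i + 1)^2 \<le> 4 * (real i)^2" proof -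
    have c: "real i \<ge> 1" using \<open>i \<ge> 1\<close> by simp
    show ?thesis unfolding b using a c by linarith
  qed
  with \<open>i \<ge> 1\<close> show ?thesis unfolding w_def by (simp add: field_simps)
qed

lemma sum_w: "m \<ge> 1 \<Longrightarrow> (\<Sum>j=1..m. w j) \<le> 2 - 1 / real m"
proof (induction m rule: nat_induct_at_least)
  case base then show ?case by (simp add: w_def)
next
  case (Suc m)
  have "(\<Sum>j=1..Suc m. w j) = (\<Sum>j=1..m. w j) + w (Suc m)" by simp
  also have "\<dots> \<le> 2 - 1 / real m + 1 / (real m + 1)^2"
  proof -
    have "w (Suc m) = 1/(real m+1)^2" by (simp add: w_def)
    then show ?thesis using Suc.IH by linarith
  qed
  also have "\<dots> \<le> 2 - 1 / real (Suc m)"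
  proof -
    define x where "x = real m"
    have x: "x \<ge> 1" using Suc(1) by (simp add: x_def)
    have "1/(x+1)^2 \<le> 1/(x*(x+1))"
      by (rule divide_left_mono) (use x in \<open>auto simp: power2_eq_square intro!: mult_right_mono\<close>)
    moreover have "1/(x*(x+1)) = 1/x - 1/(x+1)" using x by (simp add: field_simps)
    ultimately have "1 / (real m + 1)^2 + 1 / (real m + 1) \<le> 1 / real m" by (simp add: x_def)
    moreover have "1/real (Suc m) = 1/(real m + 1)" by simp
    ultimately show ?thesis by linarith
  qed
  finally show ?case .
qed

lemma term_bd:
  fixes x y :: real assumes "x > 0" "y > 0"
  shows "1/x^2 * (1/y^2) \<le> 2/(x+y)^2 * (1/x^2 + 1/y^2)"
proof -
  have "(x+y)^2 \<le> 2*(x^2+y^2)" 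
  proof -
    have "0 \<le> (x-y)^2" by simp
    then show ?thesis by (simp add: power2_diff power2_sum)
  qed
  then have "(x+y)^2 * (1/x^2 * (1/y^2)) \<le> 2 * (1/x^2 + 1/y^2)"
    using assms by (simp add: field_simps)
  moreover have "(x+y)^2 > 0" using assms by simp
  ultimately show ?thesis by (simp add: field_simps)
qed

lemma conv_w: "n \<ge> 2 \<Longrightarrow> (\<Sum>j=1..n-1. w j * w (n-j)) \<le> 8 * w n"
proof -
  assume n: "n \<ge> 2"
  have "(\<Sum>j=1..n-1. w j * w (n-j)) \<le> (\<Sum>j=1..n-1. 2 / (real n)^2 * (w j + w (n-j)))"
  proof (rule sum_mono)
    fix j assume j: "j \<in> {1..n-1}"
    then have eq: "real j + real (n-j) = real n" by auto
    have x: "real j > 0" "real (n-j) > 0" using j by auto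
    have "w j * w (n-j) \<le> 2 / (real j + real (n-j))^2 * (w j + w (n-j))"
      unfolding w_def by (rule term_bd[OF x])
    then show "w j * w (n-j) \<le> 2 / (real n)^2 * (w j + w (n-j))"
      by (simp only: eq)
  qed
  also have "\<dots> = 2 / (real n)^2 * ((\<Sum>j=1..n-1. w j) + (\<Sum>j=1..n-1. w (n-j)))"
    by (simp only: sum.distrib[symmetric] sum_distrib_left)
  finally have A: "(\<Sum>j=1..n-1. w j * w (n-j)) \<le> 2 / (real n)^2 * ((\<Sum>j=1..n-1. w j) + (\<Sum>j=1..n-1. w (n-j)))" .
  have B: "(\<Sum>j=1..n-1. w (n-j)) = (\<Sum>j=1..n-1. w j)"
  proof -
    have "(\<Sum>j=1..n-1. w (n-j)) = (\<Sum>j=1..n-1. w (n - (n - 1 + 1 - j)))"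
      by (rule sum.atLeastAtMost_rev)
    also have "\<dots> = (\<Sum>j=1..n-1. w j)"
      by (rule sum.cong) (use n in auto)
    finally show ?thesis .
  qed
  have C0: "(\<Sum>j=1..n-1. w j) \<le> 2 - 1 / real (n-1)" using sum_w[of "n-1"] n by simp
  have "2 - 1 / real (n-1) \<le> 2" by simp
  with C0 have C: "(\<Sum>j=1..n-1. w j) \<le> 2" by (rule order_trans)
  have D: "2 / (real n)^2 * ((\<Sum>j=1..n-1. w j) + (\<Sum>j=1..n-1. w (n-j))) \<le> 2 / (real n)^2 * 4"
    unfolding B using C by (intro mult_left_mono) auto
  have E: "2 / (real n)^2 * 4 = 8 * w n" by (simp add: w_def)
  show ?thesis using A D E by linarith
qed

lemma tri3: fixes x y a s b :: real assumes "s \<ge> 0"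
  shows "\<bar>x + y*a + s*b\<bar> \<le> \<bar>x\<bar> + \<bar>y\<bar>*\<bar>a\<bar> + s*\<bar>b\<bar>"
proof -
  have "\<bar>x + y*a + s*b\<bar> \<le> \<bar>x + y*a\<bar> + \<bar>s*b\<bar>" by (rule abs_triangle_ineq)
  also have "\<bar>x + y*a\<bar> \<le> \<bar>x\<bar> + \<bar>y*a\<bar>" by (rule abs_triangle_ineq)
  finally show ?thesis using assms by (simp add: abs_mult)
qed

lemma tri2: fixes x y a s b :: real assumes "s \<ge> 0"
  shows "\<bar>y*a + s*b\<bar> \<le> \<bar>y\<bar>*\<bar>a\<bar> + s*\<bar>b\<bar>"
proof -
  have "\<bar>y*a + s*b\<bar> \<le> \<bar>y*a\<bar> + \<bar>s*b\<bar>" by (rule abs_triangle_ineq)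
  then show ?thesis using assms by (simp add: abs_mult)
qed

lemma pow3: "real n + 3 \<le> 3 ^ (n+1)"
proof (induction n)
  case 0 then show ?case by simp
next
  case (Suc n) then show ?case by simp
qed

theorem lemma3p2:
  fixes \<eta> \<theta> \<sigma> \<tau> t :: real and c :: "nat \<Rightarrow> real"
  assumes "\<sigma> \<ge> 0" and "\<tau> \<ge> 0" and "\<sigma> * \<tau> \<noteq> 1" and "t > 0"
    and "c 1 = 1"
    and rec: "\<And>k. k \<ge> 2 \<Longrightarrow>
      c (k + 1) = (\<theta> - \<eta> * t) / (1 + \<sigma> * t) * c k
        + (t + \<tau>) / (1 + \<sigma> * t) *
          ((\<Sum>j=1..k-1. c j * c (k - j))
           + \<eta> * (\<Sum>j=0..k-1. c (j + 1) * c (k - j))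
           + \<sigma> * (\<Sum>j=0..k-1. c (j + 2) * c (k - j)))"
    and "p > (1::real)"
  shows "\<exists>M::real. \<forall>k\<ge>3. \<bar>c k\<bar> \<le> M ^ (k - 2) / real k powr p"
proof -
  define \<alpha> where "\<alpha> = (\<theta> - \<eta> * t) / (1 + \<sigma> * t)"
  define \<beta> where "\<beta> = (t + \<tau>) / (1 + \<sigma> * t)"
  define Q where "Q = \<bar>1 - \<beta> * \<sigma>\<bar>"
  define D where "D = max 1 (4 * \<bar>c 2\<bar>)"
  define L where "L = 4 * \<bar>\<alpha>\<bar> + \<beta> * (32 + 8 * \<bar>\<eta>\<bar> + 8 * \<sigma> * D)"
  define M where "M = max D (L / Q)"
  have pos: "1 + \<sigma> * t > 0" using assms by (simp add: add_pos_nonneg)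
  have \<beta>0: "\<beta> \<ge> 0" unfolding \<beta>_def using assms pos by simp
  have "1 - \<beta> * \<sigma> = (1 - \<sigma> * \<tau>) / (1 + \<sigma> * t)"
    unfolding \<beta>_def using pos by (simp add: field_simps)
  then have Q0: "Q > 0" unfolding Q_def using assms pos by simp
  have D1: "D \<ge> 1" unfolding D_def by simp
  have MD: "M \<ge> D" unfolding M_def by simp
  have M1: "M \<ge> 1" using MD D1 by simp
  have M0: "M > 0" using M1 by simp
  have QM: "L \<le> Q * M"
  proof -
    have "L / Q \<le> M" unfolding M_def by simp
    then have "Q * (L / Q) \<le> Q * M" using Q0 by (intro mult_left_mono) auto
    then show ?thesis using Q0 by simp
  qed
  have c1: "c 1 = 1" by fact
  have main: "\<forall>k. 2 \<le> k \<and> k \<le> n \<longrightarrow> \<bar>c k\<bar> \<le> D * M^k / M^2 * w k" for n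
  proof (induction n)
    case 0 then show ?case by simp
  next
    case (Suc m)
    show ?case
    proof (intro allI impI)
      fix k assume k: "2 \<le> k \<and> k \<le> Suc m"
      show "\<bar>c k\<bar> \<le> D * M^k / M^2 * w k"
      proof (cases "k \<le> m")
        case True then show ?thesis using Suc.IH k by blast
      next
        case False
        then have kS: "k = Suc m" using k by simp
        show ?thesis
        proof (cases "m < 2")
          case True
          then have "k = 2" using k kS by simp
          then show ?thesis using M0 unfolding D_def w_def by (simp add: power2_eq_square)
        next
          case False
          then have m2: "m \<ge> 2" by simp
          have IH: "\<And>i. 2 \<le> i \<Longrightarrow> i \<le> m \<Longrightarrow> \<bar>c i\<bar> \<le> D * M^i / M^2 * w i"
            using Suc.IH by blast
          define U where "U = D * M^m / M^2 * w (m+1)"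
          have U0: "U \<ge> 0" unfolding U_def using D1 M0 w_nonneg by simp
          have T1: "\<bar>c i * c j\<bar> \<le> D * M^(i+j) / M^3 * (w i * w j)"
            if "1 \<le> i" "1 \<le> j" "i \<le> m" "j \<le> m" "3 \<le> i + j" for i j
          proof -
            have pw: "M^(i+j) / M^3 = M^i/M^2 * (M^j / M^2) * M" using M0
              by (simp add: power_add field_simps power3_eq_cube power2_eq_square)
            have "i = 1 \<or> j = 1 \<or> (i \<ge> 2 \<and> j \<ge> 2)" using that by linarith
            then consider "i = 1" | "j = 1" | "i \<ge> 2" "j \<ge> 2" by blast
            then show ?thesis
            proof cases
              case 1
              then have "j \<ge> 2" using that by simp
              then show ?thesis using IH[of j] that 1 c1 M0 w_one
                by (simp add: power_add field_simps power3_eq_cube power2_eq_square)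
            next
              case 2
              then have "i \<ge> 2" using that by simp
              then show ?thesis using IH[of i] that 2 c1 M0 w_one
                by (simp add: power_add field_simps power3_eq_cube power2_eq_square)
            next
              case 3
              have "\<bar>c i * c j\<bar> \<le> (D * M^i / M^2 * w i) * (D * M^j / M^2 * w j)"
                unfolding abs_mult using IH[of i] IH[of j] 3 that
                by (intro mult_mono) auto
              also have "\<dots> = D * (M^i/M^2 * (M^j / M^2)) * (w i * w j) * D" by simp
              also have "\<dots> \<le> D * (M^i/M^2 * (M^j / M^2)) * (w i * w j) * M"
                using MD D1 M0 w_nonneg by (intro mult_left_mono) auto
              also have "\<dots> = D * (M^(i+j) / M^3) * (w i * w j)" unfolding pw by (simp only: ac_simps)
              also have "\<dots> = D * M^(i+j) / M^3 * (w i * w j)" by simp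
              finally show ?thesis .
            qed
          qed
          have T2: "\<bar>c i * c j\<bar> \<le> D^2 * M^(i+j) / M^4 * (w i * w j)"
            if "2 \<le> i" "2 \<le> j" "i \<le> m" "j \<le> m" for i j
          proof -
            have "\<bar>c i * c j\<bar> \<le> (D * M^i / M^2 * w i) * (D * M^j / M^2 * w j)"
              unfolding abs_mult using IH[of i] IH[of j] that
              by (intro mult_mono) auto
            also have "\<dots> = D^2 * M^(i+j) / M^4 * (w i * w j)" using M0
              by (simp add: power_add field_simps eval_nat_numeral)
            finally show ?thesis .
          qed
          obtain r where r: "m = r + 2" using m2 by (metis add.commute le_Suc_ex)
          define S1 where "S1 = (\<Sum>j=1..m-1. c j * c (m - j))"
          define S2 where "S2 = (\<Sum>j=0..m-1. c (j + 1) * c (m - j))"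
          define S3 where "S3 = (\<Sum>j=0..m-2. c (j + 2) * c (m - j))"
          have S3eq: "(\<Sum>j=0..m-1. c (j + 2) * c (m - j)) = S3 + c (m+1)"
            unfolding S3_def r using c1 by (simp add: numeral_2_eq_2)
          have eq: "c (m+1) = \<alpha> * c m + \<beta> * (S1 + \<eta> * S2 + \<sigma> * (S3 + c (m+1)))"
            using rec[OF m2] unfolding \<alpha>_def \<beta>_def S1_def S2_def S3eq[symmetric] by simp
          have eq2: "(1 - \<beta> * \<sigma>) * c (m+1) = \<alpha> * c m + \<beta> * (S1 + \<eta> * S2 + \<sigma> * S3)"
            using eq by (simp add: algebra_simps)
          have bm: "\<bar>c m\<bar> \<le> 4 * U"
          proof -
            have "\<bar>c m\<bar> \<le> D * M^m / M^2 * w m" using IH[of m] m2 by simp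
            also have "\<dots> \<le> D * M^m / M^2 * (4 * w (m+1))"
              using w_suc[of m] m2 D1 M0 by (intro mult_left_mono) auto
            also have "\<dots> = 4 * U" unfolding U_def by simp
            finally show ?thesis .
          qed
          have b1: "\<bar>S1\<bar> \<le> 32 * U"
          proof (cases "m = 2")
            case True
            then have "S1 = 1" unfolding S1_def using c1 by simp
            moreover have "U = D / 9" unfolding U_def True using M0 by (simp add: w_def)
            ultimately show ?thesis using D1 by simp
          next
            case False
            then have m3: "m \<ge> 3" using m2 by simp
            have "\<bar>S1\<bar> \<le> (\<Sum>j=1..m-1. \<bar>c j * c (m - j)\<bar>)" unfolding S1_def by (rule sum_abs)
            also have "\<dots> \<le> (\<Sum>j=1..m-1. D * M^m / M^3 * (w j * w (m-j)))"
            proof (rule sum_mono)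
              fix j assume j: "j \<in> {1..m-1}"
              then have "j + (m - j) = m" by auto
              then show "\<bar>c j * c (m - j)\<bar> \<le> D * M^m / M^3 * (w j * w (m-j))"
                using T1[of j "m-j"] j m3 by auto
            qed
            also have "\<dots> = D * M^m / M^3 * (\<Sum>j=1..m-1. w j * w (m-j))"
              by (simp add: sum_distrib_left)
            also have "\<dots> \<le> D * M^m / M^3 * (8 * w m)"
              using conv_w[of m] m2 D1 M0 by (intro mult_left_mono) auto
            also have "\<dots> \<le> D * M^m / M^3 * (32 * w (m+1))"
              using w_suc[of m] m2 D1 M0 by (intro mult_left_mono) auto
            also have "\<dots> \<le> D * M^m / M^2 * (32 * w (m+1))"
            proof -
              have p23: "M^2 \<le> M^3" using power_increasing[of 2 3 M] M1 by simp
              have q1: "0 \<le> D * M^m" using D1 M0 by simp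
              have q2: "0 < M^3 * M^2" using M0 by simp
              have "D * M^m / M^3 \<le> D * M^m / M^2"
                by (rule divide_left_mono[OF p23 q1 q2])
              then show ?thesis using w_nonneg by (intro mult_right_mono) auto
            qed
            also have "\<dots> = 32 * U" unfolding U_def by (simp add: algebra_simps)
            finally show ?thesis .
          qed
          have b2: "\<bar>S2\<bar> \<le> 8 * U"
          proof -
            have sw: "(\<Sum>j=0..m-1. w (j+1) * w (m-j)) \<le> 8 * w (m+1)"
            proof -
              have e: "m-1+1 = m" using m2 by simp
              have "(\<Sum>j=0..m-1. w (j+1) * w (m-j)) = (\<Sum>j=0..m-1. w (j+1) * w (m + 1 - (j+1)))"
                by simp
              also have "\<dots> = (\<Sum>i=0+1..m-1+1. w i * w (m + 1 - i))"
                by (rule sum.shift_bounds_cl_nat_ivl[symmetric])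
              also have "\<dots> = (\<Sum>i=1..m. w i * w (m + 1 - i))"
                by (simp only: e add_0)
              also have "\<dots> \<le> 8 * w (m+1)" using conv_w[of "m+1"] m2 by simp
              finally show ?thesis .
            qed
            have "\<bar>S2\<bar> \<le> (\<Sum>j=0..m-1. \<bar>c (j + 1) * c (m - j)\<bar>)" unfolding S2_def by (rule sum_abs)
            also have "\<dots> \<le> (\<Sum>j=0..m-1. D * M^(m+1) / M^3 * (w (j+1) * w (m-j)))"
            proof (rule sum_mono)
              fix j assume j: "j \<in> {0..m-1}"
              then have "j + 1 + (m - j) = m + 1" using m2 by auto
              then show "\<bar>c (j+1) * c (m - j)\<bar> \<le> D * M^(m+1) / M^3 * (w (j+1) * w (m-j))"
                using T1[of "j+1" "m-j"] j m2 by auto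
            qed
            also have "\<dots> = D * M^(m+1) / M^3 * (\<Sum>j=0..m-1. w (j+1) * w (m-j))"
              by (simp add: sum_distrib_left)
            also have "\<dots> \<le> D * M^(m+1) / M^3 * (8 * w (m+1))"
              by (rule mult_left_mono[OF sw]) (use M0 D1 in simp)
            also have "D * M^(m+1) / M^3 = D * M^m / M^2" using M0
              by (simp add: field_simps eval_nat_numeral)
            also have "D * M^m / M^2 * (8 * w (m+1)) = 8 * U" unfolding U_def by (simp add: algebra_simps)
            finally show ?thesis .
          qed
          have b3: "\<bar>S3\<bar> \<le> 8 * D * U"
          proof -
            have "\<bar>S3\<bar> \<le> (\<Sum>j=0..m-2. \<bar>c (j + 2) * c (m - j)\<bar>)" unfolding S3_def by (rule sum_abs)
            also have "\<dots> \<le> (\<Sum>j=0..m-2. D^2 * M^(m+2) / M^4 * (w (j+2) * w (m-j)))"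
            proof (rule sum_mono)
              fix j assume j: "j \<in> {0..m-2}"
              then have "j + 2 + (m - j) = m + 2" using m2 by auto
              then show "\<bar>c (j+2) * c (m - j)\<bar> \<le> D^2 * M^(m+2) / M^4 * (w (j+2) * w (m-j))"
                using T2[of "j+2" "m-j"] j m2 by auto
            qed
            also have "\<dots> = D^2 * M^(m+2) / M^4 * (\<Sum>j=0..m-2. w (j+2) * w (m-j))"
              by (simp add: sum_distrib_left)
            also have "\<dots> \<le> D^2 * M^(m+2) / M^4 * (8 * w (m+1))"
            proof (rule mult_left_mono)
              show "0 \<le> D^2 * M^(m+2) / M^4" using M0 by simp
            have "(\<Sum>j=0..m-2. w (j+2) * w (m-j)) = (\<Sum>i=2..m. w i * w (m + 2 - i))"
            proof -
              have e: "m-2+2 = m" using m2 by simp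
              have "(\<Sum>i=2..m. w i * w (m + 2 - i)) = (\<Sum>i=0+2..m-2+2. w i * w (m + 2 - i))"
                by (simp only: e add_0)
              also have "\<dots> = (\<Sum>j=0..m-2. w (j+2) * w (m + 2 - (j+2)))"
                by (rule sum.shift_bounds_cl_nat_ivl)
              also have "\<dots> = (\<Sum>j=0..m-2. w (j+2) * w (m - j))" by simp
              finally show ?thesis by simp
            qed
            also have "\<dots> \<le> (\<Sum>i=1..m+1. w i * w (m + 2 - i))"
              by (rule sum_mono2) (auto intro: mult_nonneg_nonneg w_nonneg)
            also have "\<dots> \<le> 8 * w (m+2)" using conv_w[of "m+2"] m2 by simp
            also have "\<dots> \<le> 8 * w (m+1)" using w_mono[of "m+1" "m+2"] by simp
            finally show "(\<Sum>j=0..m-2. w (j+2) * w (m-j)) \<le> 8 * w (m+1)" .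
            qed
            also have "D^2 * M^(m+2) / M^4 = D * (D * M^m / M^2)" using M0
              by (simp add: field_simps eval_nat_numeral)
            finally show ?thesis unfolding U_def by (simp add: algebra_simps)
          qed
          have "Q * \<bar>c (m+1)\<bar> = \<bar>\<alpha> * c m + \<beta> * (S1 + \<eta> * S2 + \<sigma> * S3)\<bar>"
            unfolding Q_def eq2[symmetric] abs_mult by simp
          also have "\<dots> \<le> \<bar>\<alpha>\<bar> * \<bar>c m\<bar> + \<beta> * (\<bar>S1\<bar> + \<bar>\<eta>\<bar> * \<bar>S2\<bar> + \<sigma> * \<bar>S3\<bar>)"
          proof -
            have "\<bar>S1 + \<eta> * S2 + \<sigma> * S3\<bar> \<le> \<bar>S1\<bar> + \<bar>\<eta>\<bar> * \<bar>S2\<bar> + \<sigma> * \<bar>S3\<bar>"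
              using assms(1) by (rule tri3)
            then have "\<beta> * \<bar>S1 + \<eta> * S2 + \<sigma> * S3\<bar> \<le> \<beta> * (\<bar>S1\<bar> + \<bar>\<eta>\<bar> * \<bar>S2\<bar> + \<sigma> * \<bar>S3\<bar>)"
              using \<beta>0 by (rule mult_left_mono)
            moreover have "\<bar>\<alpha> * c m + \<beta> * (S1 + \<eta> * S2 + \<sigma> * S3)\<bar> \<le> \<bar>\<alpha>\<bar> * \<bar>c m\<bar> + \<beta> * \<bar>S1 + \<eta> * S2 + \<sigma> * S3\<bar>"
              using \<beta>0 by (rule tri2)
            ultimately show ?thesis by linarith
          qed
          also have "\<dots> \<le> \<bar>\<alpha>\<bar> * (4 * U) + \<beta> * (32 * U + \<bar>\<eta>\<bar> * (8 * U) + \<sigma> * (8 * D * U))"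
            using bm b1 b2 b3 \<beta>0 assms(1)
            by (intro add_mono mult_left_mono) auto
          also have "\<dots> = L * U" unfolding L_def by (simp add: algebra_simps)
          also have "\<dots> \<le> Q * M * U" using QM U0 by (rule mult_right_mono)
          finally have "\<bar>c (m+1)\<bar> \<le> M * U" using Q0 by (simp add: mult.assoc)
          also have "M * U = D * M^k / M^2 * w k" unfolding U_def kS by simp
          finally show ?thesis using kS by simp
        qed
      qed
    qed
  qed
  define N where "N = D * M * (3 powr p)"
  show ?thesis
  proof (intro exI allI impI)
    fix k :: nat assume k: "k \<ge> 3"
    obtain n where n: "k = n + 3" using k by (metis add.commute le_Suc_ex)
    have k2: "k - 2 = n + 1" using n by simp
    have "\<bar>c k\<bar> \<le> D * M^k / M^2 * w k" using main[of k] k by simp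
    also have "\<dots> \<le> D * M^k / M^2" using w_le1[of k] k D1 M0
      by (intro mult_left_le) auto
    also have "D * M^k / M^2 = D * M^(n+1)" unfolding n using M0 by (simp add: power_add eval_nat_numeral field_simps)
    finally have ck: "\<bar>c k\<bar> \<le> D * M^(n+1)" .
    have kp: "real k powr p \<le> (3 powr p)^(n+1)"
    proof -
      have "(3 powr p)^(n+1) = 3 powr (real (n+1) * p)" by (rule powr_power) simp
      also have "\<dots> = (3 powr real (n+1)) powr p" by (rule powr_powr[symmetric])
      also have "3 powr real (n+1) = 3 ^ (n+1)" by (rule powr_realpow) simp
      finally have e: "(3 powr p)^(n+1) = (3 ^ (n+1)) powr p" .
      have "real k \<le> 3^(n+1)" using pow3[of n] n by simp
      then show ?thesis unfolding e using assms(7) by (intro powr_mono2) auto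
    qed
    have Dp: "D \<le> D^(n+1)" using power_increasing[of 1 "n+1" D] D1 by simp
    have a1: "D * M^(n+1) \<le> D^(n+1) * M^(n+1)" by (rule mult_right_mono[OF Dp]) (use M0 in simp)
    have a2: "0 \<le> D^(n+1) * M^(n+1)" using D1 M0 by simp
    have "D * M^(n+1) * real k powr p \<le> D^(n+1) * M^(n+1) * (3 powr p)^(n+1)"
      by (rule mult_mono[OF a1 kp a2]) simp
    also have "\<dots> = N^(k-2)" unfolding N_def k2 by (simp add: power_mult_distrib)
    finally have "\<bar>c k\<bar> * real k powr p \<le> N^(k-2)"
      using mult_right_mono[OF ck, of "real k powr p"] by simp
    moreover have "real k powr p > 0" using k by simp
    ultimately show "\<bar>c k\<bar> \<le> N ^ (k - 2) / real k powr p"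
      by (simp add: pos_le_divide_eq)
  qed
qed

end
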